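(* Let $a,b\in\mathbb F^*$, set $\hat a=a\,b\,\theta^n(b^{-1})$, and let $g\in\mathcal R$. Then $g$ is a right divisor of $x^n-a$ if and only if $gb$ is a right divisor of $x^n-\hat a$.
   Context: $\mathbb F$ is a finite field, $\theta\in\mathrm{Aut}(\mathbb F)$, $\mathcal R=\mathbb F[x;\theta]$ the skew polynomial ring (elements $\sum f_ix^i$ with left coefficients, multiplication determined by $xb=\theta(b)x$), $n\in\mathbb N$. $g$ is a right divisor of $f$ if $f=sg$ for some $s\in\mathcal R$. *)

theory Defs
  imports "HOL-Computational_Algebra.Polynomial"
begin

definition field_automorphism :: "('a::field \<Rightarrow> 'a) \<Rightarrow> bool" where
  "field_automorphism \<theta> \<longleftrightarrow> bij \<theta> \<and> (\<forall>x y. \<theta> (x + y) = \<theta> x + \<theta> y) \<and> (\<forall>x y. \<theta> (x * y) = \<theta> x * \<theta> y)"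

text \<open>Skew polynomials F[x;theta] are represented by their coefficient sequences
  (type 'a poly, coefficients written on the left); multiplication is determined by
  x b = theta(b) x, i.e. (sum f_i x^i)(sum g_j x^j) = sum f_i theta^i(g_j) x^(i+j).\<close>
definition skew_mult :: "('a::field \<Rightarrow> 'a) \<Rightarrow> 'a poly \<Rightarrow> 'a poly \<Rightarrow> 'a poly" where
  "skew_mult \<theta> f g = (\<Sum>i\<le>degree f. monom (coeff f i) i * map_poly (\<theta> ^^ i) g)"

definition skew_rdvd :: "('a::field \<Rightarrow> 'a) \<Rightarrow> 'a poly \<Rightarrow> 'a poly \<Rightarrow> bool" where
  "skew_rdvd \<theta> g f \<longleftrightarrow> (\<exists>s. f = skew_mult \<theta> s g)"

end

theory Submission
  imports Defs
begin

lemma fa_one: assumes "field_automorphism \<theta>" shows "\<theta> 1 = 1"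
proof -
  from assms have b: "bij \<theta>" and m: "\<And>x y. \<theta> (x*y) = \<theta> x * \<theta> y"
    by (auto simp: field_automorphism_def)
  obtain y where y: "\<theta> y = 1" using b by (metis bij_pointE)
  have "\<theta> 1 * \<theta> y = \<theta> y" using m[of 1 y] by simp
  thus ?thesis using y by simp
qed

lemma fa_zero: assumes "field_automorphism \<theta>" shows "\<theta> 0 = 0"
proof -
  from assms have "\<forall>x y. \<theta> (x+y) = \<theta> x + \<theta> y" by (simp add: field_automorphism_def)
  hence "\<theta> (0+0) = \<theta> 0 + \<theta> 0" by blast
  hence "\<theta> 0 = \<theta> 0 + \<theta> 0" by simp
  thus ?thesis by (metis add_cancel_right_right)
qed

lemma fa_pow:
  assumes "field_automorphism \<theta>"
  shows "(\<theta>^^k) 0 = 0" "(\<theta>^^k) 1 = 1" "(\<theta>^^k) (x*y) = (\<theta>^^k) x * (\<theta>^^k) y"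
proof -
  have m: "\<And>x y. \<theta> (x*y) = \<theta> x * \<theta> y" using assms by (auto simp: field_automorphism_def)
  show "(\<theta>^^k) 0 = 0" by (induction k) (auto simp: fa_zero[OF assms])
  show "(\<theta>^^k) 1 = 1" by (induction k) (auto simp: fa_one[OF assms])
  show "(\<theta>^^k) (x*y) = (\<theta>^^k) x * (\<theta>^^k) y" by (induction k) (auto simp: m)
qed

lemma coeff_skew:
  assumes "field_automorphism \<theta>"
  shows "coeff (skew_mult \<theta> f h) k = (\<Sum>i\<le>k. coeff f i * (\<theta>^^i) (coeff h (k-i)))"
proof -
  have "coeff (skew_mult \<theta> f h) k =
      (\<Sum>i\<le>degree f. if i \<le> k then coeff f i * (\<theta>^^i) (coeff h (k-i)) else 0)"
    unfolding skew_mult_def coeff_sum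
    by (intro sum.cong refl) (simp add: coeff_monom_mult coeff_map_poly fa_pow[OF assms])
  also have "\<dots> = (\<Sum>i\<le>degree f + k. if i \<le> k then coeff f i * (\<theta>^^i) (coeff h (k-i)) else 0)"
    by (intro sum.mono_neutral_left) (auto simp: coeff_eq_0)
  also have "\<dots> = (\<Sum>i\<le>k. coeff f i * (\<theta>^^i) (coeff h (k-i)))"
    by (subst sum.mono_neutral_right[of "{..degree f + k}" "{..k}"]) auto
  finally show ?thesis .
qed

lemma coeff_skew_const:
  assumes "field_automorphism \<theta>"
  shows "coeff (skew_mult \<theta> f [:b:]) k = coeff f k * (\<theta>^^k) b"
proof -
  have "(\<Sum>i\<le>k. coeff f i * (\<theta>^^i) (coeff [:b:] (k-i))) =
        (\<Sum>i\<in>{k}. coeff f i * (\<theta>^^i) (coeff [:b:] (k-i)))"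
    by (intro sum.mono_neutral_right) (auto simp: coeff_pCons fa_pow[OF assms] split: nat.splits)
  thus ?thesis by (simp add: coeff_skew[OF assms])
qed

lemma skew_assoc_const:
  assumes "field_automorphism \<theta>"
  shows "skew_mult \<theta> s (skew_mult \<theta> g [:b:]) = skew_mult \<theta> (skew_mult \<theta> s g) [:b:]"
proof (rule poly_eqI)
  fix k
  have "\<And>i. i \<le> k \<Longrightarrow> (\<theta>^^i) ((\<theta>^^(k-i)) b) = (\<theta>^^k) b"
    by (metis funpow_add le_add_diff_inverse o_apply)
  hence "coeff (skew_mult \<theta> s (skew_mult \<theta> g [:b:])) k =
     (\<Sum>i\<le>k. coeff s i * ((\<theta>^^i) (coeff g (k-i)) * (\<theta>^^k) b))"
    unfolding coeff_skew[OF assms, of s] coeff_skew_const[OF assms]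
    by (intro sum.cong refl) (simp add: fa_pow[OF assms])
  also have "\<dots> = coeff (skew_mult \<theta> (skew_mult \<theta> s g) [:b:]) k"
    unfolding coeff_skew_const[OF assms] coeff_skew[OF assms, of s g]
    by (simp add: sum_distrib_right mult.assoc)
  finally show "coeff (skew_mult \<theta> s (skew_mult \<theta> g [:b:])) k = coeff (skew_mult \<theta> (skew_mult \<theta> s g) [:b:]) k" .
qed

lemma skew_smult:
  assumes "field_automorphism \<theta>"
  shows "skew_mult \<theta> (smult c s) h = smult c (skew_mult \<theta> s h)"
  by (rule poly_eqI) (simp add: coeff_skew[OF assms] sum_distrib_left mult.assoc)

lemma skew_const_const:
  assumes "field_automorphism \<theta>"
  shows "skew_mult \<theta> (skew_mult \<theta> f [:b:]) [:c:] = skew_mult \<theta> f [:b*c:]"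
  by (rule poly_eqI) (simp add: coeff_skew_const[OF assms] fa_pow[OF assms] mult.assoc)

lemma skew_one:
  assumes "field_automorphism \<theta>"
  shows "skew_mult \<theta> f [:1:] = f"
  by (rule poly_eqI) (simp add: coeff_skew_const[OF assms] fa_pow[OF assms])

lemma coeff_const_if: "coeff [:x:] k = (if k = 0 then x else 0)"
  by (simp add: coeff_pCons split: nat.splits)

theorem proposition4p6:
  fixes \<theta> :: "'a::{finite,field} \<Rightarrow> 'a" and a b :: 'a and g :: "'a poly" and n :: nat
  assumes "field_automorphism \<theta>" and "a \<noteq> 0" and "b \<noteq> 0"
  shows "skew_rdvd \<theta> g (monom 1 n - [:a:]) \<longleftrightarrow>
         skew_rdvd \<theta> (skew_mult \<theta> g [:b:]) (monom 1 n - [:a * b * (\<theta> ^^ n) (inverse b):])"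
proof -
  note fa = assms(1)
  define A where "A = monom 1 n - [:a:]"
  define A' where "A' = monom 1 n - [:a * b * (\<theta> ^^ n) (inverse b):]"
  define c where "c = (\<theta>^^n) b"
  have cinv: "c * (\<theta>^^n) (inverse b) = 1"
    unfolding c_def using fa_pow(3)[OF fa, of n b "inverse b"] fa_pow(2)[OF fa, of n] assms(3) by simp
  hence c0: "c \<noteq> 0" by auto
  have E: "skew_mult \<theta> A [:b:] = smult c A'"
  proof (rule poly_eqI)
    fix k
    show "coeff (skew_mult \<theta> A [:b:]) k = coeff (smult c A') k"
      unfolding coeff_skew_const[OF fa] A_def A'_def
      using cinv
      by (cases "k = 0"; cases "k = n")
         (auto simp: coeff_monom coeff_const_if c_def fa_pow[OF fa] algebra_simps)
  qed
  have A'eq: "A' = smult (inverse c) (skew_mult \<theta> A [:b:])" using E c0 by simp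
  have Aeq: "A = skew_mult \<theta> (smult c A') [:inverse b:]"
    using E[symmetric] skew_const_const[OF fa, of A b "inverse b"] skew_one[OF fa, of A] assms(3) by simp
  show ?thesis
    unfolding A_def[symmetric] A'_def[symmetric] skew_rdvd_def
  proof
    assume "\<exists>s. A = skew_mult \<theta> s g"
    then obtain s where s: "A = skew_mult \<theta> s g" by blast
    have "A' = skew_mult \<theta> (smult (inverse c) s) (skew_mult \<theta> g [:b:])"
      by (simp add: A'eq s skew_smult[OF fa] skew_assoc_const[OF fa])
    thus "\<exists>s. A' = skew_mult \<theta> s (skew_mult \<theta> g [:b:])" by blast
  next
    assume "\<exists>s. A' = skew_mult \<theta> s (skew_mult \<theta> g [:b:])"
    then obtain s where s: "A' = skew_mult \<theta> s (skew_mult \<theta> g [:b:])" by blast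
    have "A = smult c (skew_mult \<theta> (skew_mult \<theta> (skew_mult \<theta> s g) [:b:]) [:inverse b:])"
      by (simp add: Aeq s skew_smult[OF fa] skew_assoc_const[OF fa])
    also have "\<dots> = smult c (skew_mult \<theta> s g)"
      using assms(3) by (simp only: skew_const_const[OF fa]) (simp add: skew_one[OF fa])
    also have "\<dots> = skew_mult \<theta> (smult c s) g" by (simp add: skew_smult[OF fa])
    finally have "A = skew_mult \<theta> (smult c s) g" .
    thus "\<exists>s. A = skew_mult \<theta> s g" by blast
  qed
qed

end
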